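(* For all integers $s\ge3$ and $k\ge2$ there are infinitely many pairwise non-isomorphic connected graphs $G\in\mathcal G^s_1$ with $v(G)\neq k$ such that $\tau_k(G)=\dfrac{v(G)-k}{sk-k+1}$.
   Context: All graphs are finite and simple. For integers $1\le r\le s$, $\mathcal G^s_r$ denotes the set of graphs in which every vertex has degree at least $r$ and at most $s$. $v(G)$ is the number of vertices of $G$. For an integer $k\ge1$, $\tau_k(G)$ denotes the maximum number of pairwise vertex-disjoint subgraphs of $G$ each of which is a tree with exactly $k$ edges. *)

theory Defs
  imports Complex_Main
begin

type_synonym 'a graph = "'a set \<times> 'a set set"

definition verts :: "'a graph \<Rightarrow> 'a set" where "verts G = fst G"
definition edges :: "'a graph \<Rightarrow> 'a set set" where "edges G = snd G"

definition simple_graph :: "'a graph \<Rightarrow> bool" where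
  "simple_graph G \<longleftrightarrow> finite (verts G) \<and>
     (\<forall>e\<in>edges G. \<exists>x y. x \<noteq> y \<and> x \<in> verts G \<and> y \<in> verts G \<and> e = {x, y})"

definition adj :: "'a graph \<Rightarrow> 'a \<Rightarrow> 'a \<Rightarrow> bool" where
  "adj G x y \<longleftrightarrow> {x, y} \<in> edges G"

definition degree :: "'a graph \<Rightarrow> 'a \<Rightarrow> nat" where
  "degree G x = card {e \<in> edges G. x \<in> e}"

text \<open>Membership in the class G^s_r: all degrees between r and s.\<close>
definition in_Gclass :: "nat \<Rightarrow> nat \<Rightarrow> 'a graph \<Rightarrow> bool" where
  "in_Gclass r s G \<longleftrightarrow> simple_graph G \<and> (\<forall>x\<in>verts G. r \<le> degree G x \<and> degree G x \<le> s)"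

definition connected_graph :: "'a graph \<Rightarrow> bool" where
  "connected_graph G \<longleftrightarrow> verts G \<noteq> {} \<and>
     (\<forall>x\<in>verts G. \<forall>y\<in>verts G. (adj G)\<^sup>*\<^sup>* x y)"

definition has_cycle :: "'a graph \<Rightarrow> bool" where
  "has_cycle G \<longleftrightarrow> (\<exists>cs. length cs \<ge> 3 \<and> distinct cs \<and> set cs \<subseteq> verts G \<and>
      (\<forall>i. Suc i < length cs \<longrightarrow> adj G (cs ! i) (cs ! Suc i)) \<and>
      adj G (last cs) (hd cs))"

definition is_tree :: "'a graph \<Rightarrow> bool" where
  "is_tree G \<longleftrightarrow> simple_graph G \<and> connected_graph G \<and> \<not> has_cycle G"

definition subgraph :: "'a graph \<Rightarrow> 'a graph \<Rightarrow> bool" where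
  "subgraph H G \<longleftrightarrow> verts H \<subseteq> verts G \<and> edges H \<subseteq> edges G \<and> simple_graph H"

definition tree_packing :: "nat \<Rightarrow> 'a graph \<Rightarrow> 'a graph set \<Rightarrow> bool" where
  "tree_packing k G Ts \<longleftrightarrow>
     (\<forall>T\<in>Ts. subgraph T G \<and> is_tree T \<and> card (edges T) = k) \<and>
     (\<forall>T1\<in>Ts. \<forall>T2\<in>Ts. T1 \<noteq> T2 \<longrightarrow> verts T1 \<inter> verts T2 = {})"

definition tau :: "nat \<Rightarrow> 'a graph \<Rightarrow> nat" where
  "tau k G = Max {card Ts | Ts. tree_packing k G Ts}"

definition graph_iso :: "'a graph \<Rightarrow> 'b graph \<Rightarrow> bool" where
  "graph_iso G H \<longleftrightarrow> (\<exists>f. bij_betw f (verts G) (verts H) \<and>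
     (\<forall>x\<in>verts G. \<forall>y\<in>verts G. adj G x y \<longleftrightarrow> adj H (f x) (f y)))"

end

theory Submission
  imports Defs
begin


lemma adj_sym: "adj G a b \<Longrightarrow> adj G b a"
  by (simp add: adj_def insert_commute)

lemma no_cycle_succ:
  assumes E: "\<forall>e\<in>edges G. \<exists>x. e = {x, Suc x}"
  shows "\<not> has_cycle G"
proof
  assume "has_cycle G"
  then obtain cs where len: "length cs \<ge> 3" and dist: "distinct cs"
    and cons: "\<forall>i. Suc i < length cs \<longrightarrow> adj G (cs ! i) (cs ! Suc i)"
    and lh: "adj G (last cs) (hd cs)"
    unfolding has_cycle_def by blast
  define n where "n = length cs"
  have key: "a = Suc b \<or> b = Suc a" if "adj G a b" for a b
  proof -
    from that E obtain z where "{a,b} = {z, Suc z}" unfolding adj_def by blast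
    then show ?thesis by (auto simp: doubleton_eq_iff)
  qed
  define x where "x = Max (set cs)"
  have "cs \<noteq> []" using len by auto
  then have "x \<in> set cs" unfolding x_def by simp
  then obtain j where j: "j < n" "cs ! j = x" unfolding n_def by (auto simp: in_set_conv_nth)
  have mx: "\<And>i. i < n \<Longrightarrow> cs ! i \<le> x" unfolding x_def n_def by simp
  have neq: "\<And>i. i < n \<Longrightarrow> i \<noteq> j \<Longrightarrow> cs ! i \<noteq> x"
    using dist j unfolding n_def by (metis nth_eq_iff_index_eq)
  define p where "p = (if j = 0 then n - 1 else j - 1)"
  define q where "q = (if j = n - 1 then 0 else j + 1)"
  have pq: "p < n" "q < n" "p \<noteq> j" "q \<noteq> j" "p \<noteq> q"
    using j len unfolding p_def q_def n_def by auto
  have ap: "adj G (cs ! p) x"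
  proof (cases "j = 0")
    case True
    then have "cs ! p = last cs" "x = hd cs" using j \<open>cs \<noteq> []\<close>
      unfolding p_def n_def by (auto simp: last_conv_nth hd_conv_nth)
    then show ?thesis using lh by simp
  next
    case False
    then show ?thesis using cons j unfolding p_def n_def
      by (metis Suc_pred' not_gr_zero)
  qed
  have aq: "adj G x (cs ! q)"
  proof (cases "j = n - 1")
    case True
    then have "cs ! q = hd cs" "x = last cs" using j \<open>cs \<noteq> []\<close>
      unfolding q_def n_def by (auto simp: last_conv_nth hd_conv_nth)
    then show ?thesis using lh by simp
  next
    case False
    then show ?thesis using cons j unfolding q_def n_def
      by auto
  qed
  have "cs ! p = x - 1" using key[OF ap] mx[of p] neq[of p] pq by auto
  moreover have "cs ! q = x - 1" using key[OF aq] mx[of q] neq[of q] pq by auto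
  ultimately have "cs ! p = cs ! q" by simp
  then show False using dist pq unfolding n_def by (simp add: nth_eq_iff_index_eq)
qed

definition pathg :: "nat \<Rightarrow> nat \<Rightarrow> nat graph" where
  "pathg a k = ({a..a+k}, (\<lambda>x. {x, Suc x}) ` {a..<a+k})"

lemma pathg_tree: "is_tree (pathg a k)"
proof -
  have sg: "simple_graph (pathg a k)"
    unfolding simple_graph_def pathg_def verts_def edges_def
    apply clarsimp
    subgoal for e by (rule exI[of _ e], rule exI[of _ "Suc e"]) auto
    done
  have reach: "(adj (pathg a k))\<^sup>*\<^sup>* a (a + i)" if "i \<le> k" for i
    using that
  proof (induction i)
    case 0 then show ?case by simp
  next
    case (Suc i)
    have "adj (pathg a k) (a + i) (a + Suc i)"
      using Suc.prems unfolding adj_def pathg_def edges_def by auto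
    then show ?case using Suc by (meson Suc_leD rtranclp.rtrancl_into_rtrancl)
  qed
  have sym: "symp (adj (pathg a k))" by (simp add: adj_sym sympI)
  have reach2: "(adj (pathg a k))\<^sup>*\<^sup>* a x" if "x \<in> verts (pathg a k)" for x
  proof -
    from that have "x = a + (x - a)" "x - a \<le> k" unfolding pathg_def verts_def by auto
    then show ?thesis using reach by metis
  qed
  have conn: "connected_graph (pathg a k)"
    unfolding connected_graph_def
  proof (intro conjI ballI)
    show "verts (pathg a k) \<noteq> {}" unfolding pathg_def verts_def by auto
  next
    fix x y assume "x \<in> verts (pathg a k)" "y \<in> verts (pathg a k)"
    then have "(adj (pathg a k))\<^sup>*\<^sup>* x a" "(adj (pathg a k))\<^sup>*\<^sup>* a y"
      using reach2 sym by (auto simp: symp_rtranclp[THEN sympD])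
    then show "(adj (pathg a k))\<^sup>*\<^sup>* x y" by simp
  qed
  have "\<not> has_cycle (pathg a k)"
    by (rule no_cycle_succ) (auto simp: pathg_def edges_def)
  then show ?thesis using sg conn unfolding is_tree_def by simp
qed

lemma pathg_card: "card (edges (pathg a k)) = k"
proof -
  have "inj_on (\<lambda>x. {x, Suc x}) {a..<a+k}" by (auto simp: inj_on_def doubleton_eq_iff)
  then show ?thesis unfolding pathg_def edges_def by (simp add: card_image)
qed



locale constr =
  fixes k s m :: nat
  assumes k2: "2 \<le> k" and s3: "3 \<le> s" and m1: "1 \<le> m"
begin

definition enc :: "nat \<Rightarrow> nat \<Rightarrow> nat" where "enc q r = q * Suc k + r"
definition MM :: nat where "MM = m + 1 + m * (s - 2)"
definition VV :: "nat set" where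
  "VV = {enc q r | q r. q < MM \<and> (r < k \<or> (q < m \<and> r = k))}"
definition EA :: "nat set set" where "EA = {{enc q r, enc q (Suc r)} | q r. q < MM \<and> r < k - 1}"
definition EB :: "nat set set" where "EB = {{enc q (k-1), enc q k} | q. q < m}"
definition EC :: "nat set set" where "EC = {{enc q k, enc (Suc q) 0} | q. q < m}"
definition ED :: "nat set set" where
  "ED = {{enc b k, enc (m + 1 + b*(s-2) + j) 0} | b j. b < m \<and> j < s - 2}"
definition EE :: "nat set set" where "EE = EA \<union> EB \<union> EC \<union> ED"
definition GG :: "nat graph" where "GG = (VV, EE)"

lemma enc_div[simp]: "r < Suc k \<Longrightarrow> enc q r div Suc k = q"
  unfolding enc_def by (metis add.commute div_mult_self1 div_less add_0 nat.simps(3))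
lemma enc_mod[simp]: "r < Suc k \<Longrightarrow> enc q r mod Suc k = r"
  unfolding enc_def by (metis add.commute mod_mult_self1 mod_less)
lemma enc_eq_iff[simp]: "r < Suc k \<Longrightarrow> r' < Suc k \<Longrightarrow> enc q r = enc q' r' \<longleftrightarrow> q = q' \<and> r = r'"
  by (metis enc_div enc_mod)
lemma enc_all: "x = enc (x div Suc k) (x mod Suc k)"
  unfolding enc_def by (metis div_mult_mod_eq)
lemma enc_Suc: "r < k \<Longrightarrow> Suc (enc q r) = enc q (Suc r)"
  by (simp add: enc_def)
lemma enc_Suc2: "Suc (enc q k) = enc (Suc q) 0"
  by (simp add: enc_def)
lemma enc_lt: assumes "r < Suc k" "q < q'" shows "enc q r < enc q' r'"
proof -
  have "Suc q * Suc k \<le> q' * Suc k" using assms(2) by (intro mult_le_mono1) simp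
  then show ?thesis using assms(1) by (simp add: enc_def)
qed
lemma enc_lt2: "r < r' \<Longrightarrow> enc q r < enc q r'"
  by (simp add: enc_def)

lemma k1: "k - 1 < k" "Suc (k - 1) = k" using k2 by auto

lemma MM_gt: "m < MM" unfolding MM_def by simp

definition DD :: "(nat \<times> nat) set" where
  "DD = {..<MM} \<times> {..<k} \<union> {..<m} \<times> {k}"

lemma VV_img: "VV = (\<lambda>(q,r). enc q r) ` DD"
  unfolding VV_def DD_def
proof (intro equalityI subsetI)
  fix x assume "x \<in> {enc q r |q r. q < MM \<and> (r < k \<or> q < m \<and> r = k)}"
  then obtain q r where "x = enc q r" "q < MM" "r < k \<or> q < m \<and> r = k" by blast
  then show "x \<in> (\<lambda>(x, y). enc x y) ` ({..<MM} \<times> {..<k} \<union> {..<m} \<times> {k})"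
    using MM_gt by (auto intro!: image_eqI[of _ _ "(q,r)"])
qed (use MM_gt in \<open>auto, metis order.strict_trans\<close>)

lemma inj_DD: "inj_on (\<lambda>(q,r). enc q r) DD"
  unfolding DD_def inj_on_def by auto

lemma finite_VV: "finite VV"
  unfolding VV_img DD_def by simp

lemma card_VV: "card VV = k + m * ((s - 1) * k + 1)"
proof -
  have "card DD = MM * k + m"
    unfolding DD_def by (subst card_Un_disjoint) (auto simp: card_cartesian_product)
  moreover obtain t where t: "s = Suc (Suc (Suc t))" using s3 by (metis Suc_pred' Suc_le_lessD le_less_Suc_eq not_less_eq_eq zero_less_Suc numeral_3_eq_3 less_imp_Suc_add)
  ultimately show ?thesis
    unfolding VV_img card_image[OF inj_DD] MM_def by (simp add: algebra_simps)
qed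

end


context constr begin

lemma VV_mem1: "q < MM \<Longrightarrow> r < k \<Longrightarrow> enc q r \<in> VV"
  unfolding VV_def by blast
lemma VV_mem2: "q < m \<Longrightarrow> enc q k \<in> VV"
  unfolding VV_def using MM_gt by force
lemma VV_cases:
  assumes "x \<in> VV"
  obtains q r where "x = enc q r" "q < MM" "r < k"
    | q where "x = enc q k" "q < m"
  using assms unfolding VV_def by blast

lemma leg_lt: assumes "b < m" "j < s - 2" shows "m + 1 + b*(s-2) + j < MM"
proof -
  have "b * (s-2) + (s-2) \<le> m * (s-2)"
    using assms(1) mult_le_mono1[of "Suc b" m "s-2"] by simp
  then show ?thesis unfolding MM_def using assms(2) by simp
qed

lemma leg_inv: assumes "j < s - 2" shows "(m + 1 + b*(s-2) + j - m - 1) div (s - 2) = b"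
proof -
  have "(m + 1 + b*(s-2) + j - m - 1) = j + (s-2) * b" by simp
  then show ?thesis using assms by simp
qed

lemma dbl_intro: "a \<noteq> b \<Longrightarrow> a \<in> V \<Longrightarrow> b \<in> V \<Longrightarrow> e = {a,b} \<Longrightarrow>
   \<exists>x y. x \<noteq> y \<and> x \<in> V \<and> y \<in> V \<and> e = {x, y}"
  by blast

lemma sg: "simple_graph GG"
  unfolding simple_graph_def GG_def verts_def edges_def fst_conv snd_conv
proof (intro conjI ballI)
  show "finite VV" using finite_VV by simp
next
  fix e assume "e \<in> EE"
  then have "e \<in> EA \<or> e \<in> EB \<or> e \<in> EC \<or> e \<in> ED" unfolding EE_def by auto
  then show "\<exists>x y. x \<noteq> y \<and> x \<in> VV \<and> y \<in> VV \<and> e = {x, y}"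
  proof (elim disjE)
    assume "e \<in> EA"
    then obtain q r where e: "e = {enc q r, enc q (Suc r)}" "q < MM" "r < k - 1" unfolding EA_def by blast
    show ?thesis
    proof (rule dbl_intro[OF _ _ _ e(1)])
      show "enc q r \<noteq> enc q (Suc r)" using e(3) by simp
      show "enc q r \<in> VV" using e(2,3) by (intro VV_mem1) simp_all
      show "enc q (Suc r) \<in> VV" using e(2,3) by (intro VV_mem1) simp_all
    qed
  next
    assume "e \<in> EB"
    then obtain q where e: "e = {enc q (k-1), enc q k}" "q < m" unfolding EB_def by blast
    show ?thesis
    proof (rule dbl_intro[OF _ _ _ e(1)])
      show "enc q (k-1) \<noteq> enc q k" using k2 by simp
      show "enc q (k-1) \<in> VV" using e(2) MM_gt k2 by (intro VV_mem1) simp_all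
      show "enc q k \<in> VV" using e(2) by (intro VV_mem2)
    qed
  next
    assume "e \<in> EC"
    then obtain q where e: "e = {enc q k, enc (Suc q) 0}" "q < m" unfolding EC_def by blast
    show ?thesis
    proof (rule dbl_intro[OF _ _ _ e(1)])
      show "enc q k \<noteq> enc (Suc q) 0" by simp
      show "enc (Suc q) 0 \<in> VV" using e(2) MM_gt k2 by (intro VV_mem1) simp_all
      show "enc q k \<in> VV" using e(2) by (intro VV_mem2)
    qed
  next
    assume "e \<in> ED"
    then obtain b j where e: "e = {enc b k, enc (m + 1 + b*(s-2) + j) 0}" "b < m" "j < s-2"
      unfolding ED_def by blast
    show ?thesis
    proof (rule dbl_intro[OF _ _ _ e(1)])
      show "enc b k \<noteq> enc (m + 1 + b*(s-2) + j) 0" using k2 by simp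
      show "enc (m + 1 + b*(s-2) + j) 0 \<in> VV" using e(2,3) leg_lt k2 by (intro VV_mem1) simp_all
      show "enc b k \<in> VV" using e(2) by (intro VV_mem2)
    qed
  qed
qed

lemma verts_GG[simp]: "verts GG = VV" and edges_GG[simp]: "edges GG = EE"
  unfolding GG_def verts_def edges_def by auto

lemma EE_dbl: "e \<in> EE \<Longrightarrow> \<exists>x y. x \<noteq> y \<and> x \<in> VV \<and> y \<in> VV \<and> e = {x, y}"
  using sg unfolding simple_graph_def by auto

lemma smaller_nb:
  assumes "x \<in> VV" "x \<noteq> enc 0 0"
  shows "\<exists>y\<in>VV. y < x \<and> {y, x} \<in> EE"
proof -
  obtain q r where x: "x = enc q r" "r < Suc k" and qr: "q < MM" "r < k \<or> q < m \<and> r = k"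
    using assms(1) unfolding VV_def by auto
  show ?thesis
  proof (cases "r > 0")
    case True
    have y: "enc q (r-1) \<in> VV" using qr True VV_mem1[of q "r-1"] by auto
    have lt: "enc q (r-1) < x" using x True by (simp add: enc_lt2)
    have "{enc q (r-1), x} \<in> EE"
    proof (cases "r - 1 < k - 1")
      case True
      then have "{enc q (r-1), enc q (Suc (r-1))} \<in> EA" using qr unfolding EA_def by blast
      then show ?thesis using \<open>r > 0\<close> x unfolding EE_def by auto
    next
      case False
      then have "r = k" "q < m" using qr k2 by auto
      then have "{enc q (k-1), enc q k} \<in> EB" unfolding EB_def by blast
      then show ?thesis using \<open>r = k\<close> x unfolding EE_def by auto
    qed
    then show ?thesis using y lt by blast
  next
    case False
    then have r0: "r = 0" by simp
    then have q0: "q > 0" using assms(2) x by (cases q) auto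
    show ?thesis
    proof (cases "q \<le> m")
      case True
      have y: "enc (q-1) k \<in> VV" using VV_mem2[of "q-1"] True q0 by simp
      have lt: "enc (q-1) k < x" unfolding x(1) by (rule enc_lt) (use q0 in simp_all)
      have "q - 1 < m" using True q0 by simp
      then have "{enc (q-1) k, enc (Suc (q-1)) 0} \<in> EC" unfolding EC_def by blast
      then have "{enc (q-1) k, x} \<in> EE" using q0 r0 x unfolding EE_def by auto
      then show ?thesis using y lt by blast
    next
      case False
      define b where "b = (q - m - 1) div (s - 2)"
      define j where "j = (q - m - 1) mod (s - 2)"
      have sp: "s - 2 > 0" using s3 by simp
      have j: "j < s - 2" unfolding j_def using sp by simp
      have "(q-m-1) div (s-2) * (s-2) + (q-m-1) mod (s-2) = q-m-1" by (rule div_mult_mod_eq)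
      then have qe: "q = m + 1 + b * (s-2) + j" unfolding b_def[symmetric] j_def[symmetric]
        using False by linarith
      have "q - m - 1 < m * (s - 2)" using qr False unfolding MM_def by linarith
      then have bm: "b < m" unfolding b_def using sp
        by (simp add: div_less_iff_less_mult)
      have y: "enc b k \<in> VV" using VV_mem2 bm by simp
      have bl: "b \<le> q - m - 1" unfolding b_def by simp
      have lt: "enc b k < x" unfolding x(1) by (rule enc_lt) (use False bl in simp_all)
      have "{enc b k, enc (m + 1 + b*(s-2) + j) 0} \<in> ED" using bm j unfolding ED_def by blast
      then have "{enc b k, x} \<in> EE" using qe r0 x unfolding EE_def by auto
      then show ?thesis using y lt by blast
    qed
  qed
qed

lemma adj_GG: "adj GG x y \<longleftrightarrow> {x, y} \<in> EE"
  unfolding adj_def by simp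

lemma conn: "connected_graph GG"
proof -
  have z: "enc 0 0 \<in> VV" using VV_mem1[of 0 0] MM_gt k2 by simp
  have r: "(adj GG)\<^sup>*\<^sup>* (enc 0 0) x" if "x \<in> VV" for x
    using that
  proof (induction x rule: less_induct)
    case (less x)
    show ?case
    proof (cases "x = enc 0 0")
      case False
      then obtain y where "y \<in> VV" "y < x" "{y, x} \<in> EE" using smaller_nb less.prems by blast
      then show ?thesis using less.IH[of y] by (simp add: adj_GG rtranclp.rtrancl_into_rtrancl)
    qed simp
  qed
  have sym: "symp (adj GG)" by (simp add: adj_sym sympI)
  show ?thesis unfolding connected_graph_def
  proof (intro conjI ballI)
    show "verts GG \<noteq> {}" using z by auto
  next
    fix x y assume "x \<in> verts GG" "y \<in> verts GG"
    then have "(adj GG)\<^sup>*\<^sup>* x (enc 0 0)" "(adj GG)\<^sup>*\<^sup>* (enc 0 0) y"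
      using r sym by (auto simp: symp_rtranclp[THEN sympD])
    then show "(adj GG)\<^sup>*\<^sup>* x y" by simp
  qed
qed

end


context constr begin

lemma ABC_form: "e \<in> EA \<union> EB \<union> EC \<Longrightarrow> \<exists>z. e = {z, Suc z}"
proof -
  assume "e \<in> EA \<union> EB \<union> EC"
  then consider "e \<in> EA" | "e \<in> EB" | "e \<in> EC" by blast
  then show ?thesis
  proof cases
    case 1
    then obtain q r where e: "e = {enc q r, enc q (Suc r)}" "r < k - 1" unfolding EA_def by blast
    then have "Suc (enc q r) = enc q (Suc r)" by (intro enc_Suc) simp
    then show ?thesis using e by metis
  next
    case 2
    then obtain q where e: "e = {enc q (k-1), enc q k}" unfolding EB_def by blast
    have "Suc (enc q (k-1)) = enc q (Suc (k-1))" using k2 by (intro enc_Suc) simp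
    then show ?thesis using e k1 by metis
  next
    case 3
    then obtain q where e: "e = {enc q k, enc (Suc q) 0}" unfolding EC_def by blast
    then show ?thesis using enc_Suc2 by metis
  qed
qed

lemma nb_ABC: "{x, y} \<in> EA \<union> EB \<union> EC \<Longrightarrow> y = x - 1 \<or> y = Suc x"
proof -
  assume "{x, y} \<in> EA \<union> EB \<union> EC"
  then obtain z where "{x, y} = {z, Suc z}" using ABC_form by blast
  then show ?thesis by (auto simp: doubleton_eq_iff)
qed

lemma nbD_center:
  assumes "q < m"
  shows "{y. {enc q k, y} \<in> ED} \<subseteq> (\<lambda>j. enc (m + 1 + q*(s-2) + j) 0) ` {..<s-2}"
proof
  fix y assume "y \<in> {y. {enc q k, y} \<in> ED}"
  then obtain b j where e: "{enc q k, y} = {enc b k, enc (m + 1 + b*(s-2) + j) 0}" "j < s-2"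
    unfolding ED_def by blast
  have "enc q k \<noteq> enc (m + 1 + b*(s-2) + j) 0" using k2 by simp
  then have "enc q k = enc b k" "y = enc (m + 1 + b*(s-2) + j) 0" using e(1)
    by (auto simp: doubleton_eq_iff)
  then show "y \<in> (\<lambda>j. enc (m + 1 + q*(s-2) + j) 0) ` {..<s-2}" using e(2) by simp
qed

lemma nbD_other:
  assumes "r < k"
  shows "{y. {enc q r, y} \<in> ED} \<subseteq> {enc ((q - m - 1) div (s - 2)) k}"
proof
  fix y assume "y \<in> {y. {enc q r, y} \<in> ED}"
  then obtain b j where e: "{enc q r, y} = {enc b k, enc (m + 1 + b*(s-2) + j) 0}" "j < s-2"
    unfolding ED_def by blast
  have "enc q r \<noteq> enc b k" using assms by simp
  then have "enc q r = enc (m + 1 + b*(s-2) + j) 0" "y = enc b k" using e(1)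
    by (auto simp: doubleton_eq_iff)
  then have "q = m + 1 + b*(s-2) + j" "y = enc b k" using assms by simp_all
  then show "y \<in> {enc ((q - m - 1) div (s - 2)) k}" using leg_inv[OF e(2)] by simp
qed

lemma deg_sub: "{e \<in> EE. x \<in> e} \<subseteq> (\<lambda>y. {x, y}) ` {y. {x, y} \<in> EE}"
proof
  fix e assume "e \<in> {e \<in> EE. x \<in> e}"
  then have e: "e \<in> EE" "x \<in> e" by auto
  then obtain a b where "e = {a, b}" using EE_dbl by blast
  then have "e = {x, if x = a then b else a}" using e(2) by auto
  then show "e \<in> (\<lambda>y. {x, y}) ` {y. {x, y} \<in> EE}" using e(1) by auto
qed

lemma deg_le:
  assumes "finite B" "{y. {x, y} \<in> EE} \<subseteq> B"
  shows "degree GG x \<le> card B"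
proof -
  have "degree GG x = card {e \<in> EE. x \<in> e}" unfolding degree_def by simp
  also have "\<dots> \<le> card ((\<lambda>y. {x, y}) ` B)"
  proof (rule card_mono)
    show "finite ((\<lambda>y. {x, y}) ` B)" using assms(1) by simp
    show "{e \<in> EE. x \<in> e} \<subseteq> (\<lambda>y. {x, y}) ` B"
      using deg_sub[of x] image_mono[OF assms(2), of "\<lambda>y. {x, y}"] by blast
  qed
  also have "\<dots> \<le> card B" by (rule card_image_le[OF assms(1)])
  finally show ?thesis .
qed

lemma nb_split: "{y. {x, y} \<in> EE} \<subseteq> {x - 1, Suc x} \<union> {y. {x, y} \<in> ED}"
  using nb_ABC unfolding EE_def by blast

lemma finite_EE: "finite EE"
proof -
  have "EE \<subseteq> Pow VV" using EE_dbl by blast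
  then show ?thesis using finite_VV by (meson finite_Pow_iff finite_subset)
qed

lemma deg_upper:
  assumes "x \<in> VV" shows "degree GG x \<le> s"
  using assms
proof (cases rule: VV_cases)
  case (1 q r)
  define B where "B = {x - 1, Suc x} \<union> {enc ((q - m - 1) div (s - 2)) k}"
  have "{y. {x, y} \<in> EE} \<subseteq> B" unfolding B_def using nb_split[of x] nbD_other[of r q] 1 by auto
  then have "degree GG x \<le> card B" by (intro deg_le) (auto simp: B_def)
  also have "card B \<le> 3" unfolding B_def by (simp add: card_insert_le_m1)
  finally show ?thesis using s3 by simp
next
  case (2 q)
  define I where "I = (\<lambda>j. enc (m + 1 + q*(s-2) + j) 0) ` {..<s-2}"
  define B where "B = {x - 1, Suc x} \<union> I"
  have "{y. {x, y} \<in> EE} \<subseteq> B" unfolding B_def I_def using nb_split[of x] nbD_center[of q] 2 by auto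
  then have "degree GG x \<le> card B" by (intro deg_le) (auto simp: B_def I_def)
  also have "card B \<le> card {x - 1, Suc x} + card I" unfolding B_def by (rule card_Un_le)
  also have "\<dots> \<le> 2 + (s - 2)"
  proof (rule add_mono)
    show "card {x - 1, Suc x} \<le> 2" by (simp add: card_insert_le_m1)
    show "card I \<le> s - 2" unfolding I_def using card_image_le[of "{..<s-2}"] by simp
  qed
  finally show ?thesis using s3 by simp
qed

lemma deg_lower:
  assumes "x \<in> VV" shows "1 \<le> degree GG x"
proof -
  have "\<exists>e. e \<in> EE \<and> x \<in> e"
  proof (cases "x = enc 0 0")
    case True
    have "{enc 0 0, enc 0 (Suc 0)} \<in> EA" unfolding EA_def using MM_gt k2 by force
    then show ?thesis using True unfolding EE_def by blast
  next
    case False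
    then show ?thesis using smaller_nb[OF assms] by blast
  qed
  then have "{e \<in> EE. x \<in> e} \<noteq> {}" by blast
  moreover have "finite {e \<in> EE. x \<in> e}" using finite_EE by simp
  ultimately show ?thesis unfolding degree_def edges_GG
    by (simp add: Suc_leI card_gt_0_iff)
qed

lemma in_class: "in_Gclass 1 s GG"
  unfolding in_Gclass_def using sg deg_upper deg_lower by simp

end


context constr begin

definition Tb :: "nat \<Rightarrow> nat graph" where "Tb b = pathg (enc b 0) k"

lemma enc_add: "enc b 0 + t = enc b t" by (simp add: enc_def)

lemma verts_Tb: "verts (Tb b) = {enc b 0 .. enc b 0 + k}"
  unfolding Tb_def pathg_def verts_def by simp
lemma edges_Tb: "edges (Tb b) = (\<lambda>x. {x, Suc x}) ` {enc b 0 ..< enc b 0 + k}"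
  unfolding Tb_def pathg_def edges_def by simp

lemma verts_Tb_iff: "z \<in> verts (Tb b) \<longleftrightarrow> (\<exists>t\<le>k. z = enc b t)"
proof
  assume "z \<in> verts (Tb b)"
  then have "enc b 0 \<le> z" "z \<le> enc b 0 + k" unfolding verts_Tb by auto
  then have "z = enc b 0 + (z - enc b 0)" "z - enc b 0 \<le> k" by auto
  then show "\<exists>t\<le>k. z = enc b t" unfolding enc_add by blast
next
  assume "\<exists>t\<le>k. z = enc b t"
  then obtain t where "t \<le> k" "z = enc b t" by blast
  then have "t \<le> k" "z = enc b 0 + t" using enc_add[of b t] by auto
  then show "z \<in> verts (Tb b)" unfolding verts_Tb by simp
qed

lemma Tb_sub: assumes "b < m" shows "subgraph (Tb b) GG"
  unfolding subgraph_def
proof (intro conjI)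
  show "verts (Tb b) \<subseteq> verts GG"
  proof
    fix z assume "z \<in> verts (Tb b)"
    then obtain t where t: "t \<le> k" "z = enc b t" using verts_Tb_iff by blast
    show "z \<in> verts GG"
    proof (cases "t < k")
      case True then show ?thesis using t VV_mem1[of b t] assms MM_gt by simp
    next
      case False then show ?thesis using t VV_mem2[of b] assms by simp
    qed
  qed
  show "edges (Tb b) \<subseteq> edges GG"
  proof
    fix e assume "e \<in> edges (Tb b)"
    then obtain x where x: "e = {x, Suc x}" "enc b 0 \<le> x" "x < enc b 0 + k" unfolding edges_Tb by auto
    define t where "t = x - enc b 0"
    have "x = enc b 0 + t" using x(2) unfolding t_def by simp
    then have xt1: "x = enc b t" by (simp only: enc_add)
    have xt2: "t < k" using x(2,3) unfolding t_def by arith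
    note xt = xt1 xt2
    have sx: "Suc x = enc b (Suc t)" using xt enc_Suc by simp
    show "e \<in> edges GG"
    proof (cases "t < k - 1")
      case True
      have "b < MM" using assms MM_gt by simp
      then have "{enc b t, enc b (Suc t)} \<in> EA" unfolding EA_def using True by blast
      then show ?thesis using x xt sx by (simp add: EE_def)
    next
      case False
      then have "t = k - 1" using xt by simp
      then have "{enc b t, enc b (Suc t)} \<in> EB" unfolding EB_def using assms k1 by auto
      then show ?thesis using x xt sx by (simp add: EE_def)
    qed
  qed
  show "simple_graph (Tb b)" using pathg_tree unfolding Tb_def is_tree_def by simp
qed

lemma Tb_disj: assumes "b \<noteq> b'" shows "verts (Tb b) \<inter> verts (Tb b') = {}"
proof -
  have "False" if "z \<in> verts (Tb b)" "z \<in> verts (Tb b')" for z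
  proof -
    have "\<exists>t\<le>k. z = enc b t" using that(1) verts_Tb_iff by simp
    then obtain t where t: "t \<le> k" "z = enc b t" by (elim exE conjE)
    have "\<exists>t\<le>k. z = enc b' t" using that(2) verts_Tb_iff by simp
    then obtain t' where t': "t' \<le> k" "z = enc b' t'" by (elim exE conjE)
    have "enc b t = enc b' t'" using t t' by simp
    then show False using assms t(1) t'(1) by (simp add: le_imp_less_Suc)
  qed
  then show ?thesis by blast
qed

lemma Tb_inj: "inj_on Tb {..<m}"
proof (rule inj_onI)
  fix b b' assume eq: "Tb b = Tb b'"
  have mem: "enc b 0 \<in> verts (Tb b)" unfolding verts_Tb by simp
  show "b = b'"
  proof (rule ccontr)
    assume "b \<noteq> b'"
    then have "verts (Tb b) \<inter> verts (Tb b') = {}" by (rule Tb_disj)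
    then have "verts (Tb b) = {}" using eq by simp
    then show False using mem by simp
  qed
qed

lemma packing_m: "tree_packing k GG (Tb ` {..<m})"
  unfolding tree_packing_def
proof (intro conjI ballI impI)
  fix T assume "T \<in> Tb ` {..<m}"
  then obtain b where b: "b < m" "T = Tb b" by (elim imageE) simp
  have "subgraph (Tb b) GG" using b(1) by (rule Tb_sub)
  moreover have "is_tree (Tb b)" unfolding Tb_def by (rule pathg_tree)
  moreover have "card (edges (Tb b)) = k" unfolding Tb_def by (rule pathg_card)
  ultimately show "subgraph T GG" "is_tree T" "card (edges T) = k" using b(2) by simp_all
next
  fix T1 T2 assume "T1 \<in> Tb ` {..<m}" "T2 \<in> Tb ` {..<m}" and ne: "T1 \<noteq> T2"
  then obtain b1 b2 where "T1 = Tb b1" "T2 = Tb b2" by (elim imageE) simp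
  moreover have "b1 \<noteq> b2" using ne calculation by metis
  ultimately show "verts T1 \<inter> verts T2 = {}" using Tb_disj by simp
qed

lemma has_center:
  assumes sub: "subgraph T GG" and tr: "is_tree T" and ck: "card (edges T) = k"
  shows "\<exists>b<m. enc b k \<in> verts T"
proof (rule ccontr)
  assume nc: "\<not> (\<exists>b<m. enc b k \<in> verts T)"
  have sT: "simple_graph T" using tr unfolding is_tree_def by simp
  have eT: "e \<subseteq> verts T" if he: "e \<in> edges T" for e
  proof -
    obtain x y where "x \<in> verts T" "y \<in> verts T" "e = {x, y}"
      using sT he unfolding simple_graph_def by meson
    then show ?thesis by simp
  qed
  have eE: "e \<in> EE" if "e \<in> edges T" for e
    using that sub unfolding subgraph_def edges_GG by (meson subsetD)
  have eform: "\<exists>q r. r < k - 1 \<and> e = {enc q r, enc q (Suc r)}" if "e \<in> edges T" for e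
  proof -
    have ncE: "enc q k \<notin> e" if "q < m" for q
      using nc eT[OF \<open>e \<in> edges T\<close>] that by blast
    have "e \<notin> EB"
    proof
      assume "e \<in> EB"
      then obtain q where "q < m" "e = {enc q (k-1), enc q k}" unfolding EB_def by blast
      then show False using ncE[of q] by simp
    qed
    moreover have "e \<notin> EC"
    proof
      assume "e \<in> EC"
      then obtain q where "q < m" "e = {enc q k, enc (Suc q) 0}" unfolding EC_def by blast
      then show False using ncE[of q] by simp
    qed
    moreover have "e \<notin> ED"
    proof
      assume "e \<in> ED"
      then obtain q j where "q < m" "e = {enc q k, enc (m + 1 + q*(s-2) + j) 0}" unfolding ED_def by blast
      then show False using ncE[of q] by simp
    qed
    ultimately have "e \<in> EA" using eE[OF that] unfolding EE_def by blast
    then show ?thesis unfolding EA_def by blast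
  qed
  have blk: "u div Suc k = v div Suc k" if "adj T u v" for u v
  proof -
    have "{u, v} \<in> edges T" using that unfolding adj_def .
    then obtain q r where qr: "r < k - 1" "{u, v} = {enc q r, enc q (Suc r)}"
      using eform by blast
    then have "u div Suc k = q" "v div Suc k = q" by (auto simp: doubleton_eq_iff)
    then show ?thesis by simp
  qed
  have conn: "connected_graph T" using tr unfolding is_tree_def by simp
  then obtain u0 where u0: "u0 \<in> verts T" unfolding connected_graph_def by blast
  define q0 where "q0 = u0 div Suc k"
  have allb: "v div Suc k = q0" if "v \<in> verts T" for v
  proof -
    have "(adj T)\<^sup>*\<^sup>* u0 v" using conn u0 that unfolding connected_graph_def by blast
    then show ?thesis
    proof (induction rule: rtranclp_induct)
      case base then show ?case by (simp add: q0_def)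
    next
      case (step y z) then show ?case using blk[of y z] by simp
    qed
  qed
  have "edges T \<subseteq> (\<lambda>r. {enc q0 r, enc q0 (Suc r)}) ` {..<k-1}"
  proof
    fix e assume e: "e \<in> edges T"
    then obtain q r where qr: "r < k - 1" "e = {enc q r, enc q (Suc r)}" using eform by blast
    have "enc q r \<in> verts T" using eT[OF e] qr(2) by simp
    then have "enc q r div Suc k = q0" by (rule allb)
    then have "q = q0" using qr(1) by simp
    then show "e \<in> (\<lambda>r. {enc q0 r, enc q0 (Suc r)}) ` {..<k-1}" using qr by simp
  qed
  then have "card (edges T) \<le> card ((\<lambda>r. {enc q0 r, enc q0 (Suc r)}) ` {..<k-1})"
    by (intro card_mono) auto
  also have "\<dots> \<le> k - 1" using card_image_le[of "{..<k-1}"] by simp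
  finally show False using ck k2 by simp
qed

lemma packing_le:
  assumes P: "tree_packing k GG Ts" shows "card Ts \<le> m"
proof -
  define f where "f T = (SOME b. b < m \<and> enc b k \<in> verts T)" for T
  have f: "f T < m \<and> enc (f T) k \<in> verts T" if hT: "T \<in> Ts" for T
  proof -
    have "subgraph T GG" "is_tree T" "card (edges T) = k"
      using P hT unfolding tree_packing_def by auto
    then have "\<exists>b. b < m \<and> enc b k \<in> verts T" using has_center by blast
    then show ?thesis unfolding f_def by (rule someI_ex)
  qed
  have "inj_on f Ts"
  proof (rule inj_onI)
    fix T1 T2 assume h: "T1 \<in> Ts" "T2 \<in> Ts" "f T1 = f T2"
    show "T1 = T2"
    proof (rule ccontr)
      assume "T1 \<noteq> T2"
      then have "verts T1 \<inter> verts T2 = {}" using P h(1,2) unfolding tree_packing_def by blast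
      moreover have "enc (f T1) k \<in> verts T1" using f[OF h(1)] by simp
      moreover have "enc (f T1) k \<in> verts T2" using f[OF h(2)] h(3) by simp
      ultimately show False by blast
    qed
  qed
  moreover have "f ` Ts \<subseteq> {..<m}" using f by auto
  ultimately have "card Ts \<le> card {..<m}" by (intro card_inj_on_le) auto
  then show ?thesis by simp
qed

lemma tau_GG: "tau k GG = m"
proof -
  define S where "S = {card Ts | Ts. tree_packing k GG (Ts :: nat graph set)}"
  have c: "card (Tb ` {..<m}) = m" using card_image[OF Tb_inj] by simp
  have "m \<in> S" unfolding S_def
    by (rule CollectI, rule exI[of _ "Tb ` {..<m}"]) (simp add: packing_m c)
  moreover have le: "\<forall>x\<in>S. x \<le> m" unfolding S_def using packing_le by blast
  moreover have "finite S"
  proof (rule finite_subset)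
    show "S \<subseteq> {..m}" using le by auto
  qed simp
  ultimately have "Max S = m" by (intro Max_eqI) auto
  then show ?thesis unfolding tau_def S_def .
qed

end


lemma constr_inst: "3 \<le> s \<Longrightarrow> 2 \<le> k \<Longrightarrow> constr k s (Suc n)"
  by unfold_locales auto

theorem theorem1p10:
  fixes s k :: nat
  assumes "s \<ge> 3" and "k \<ge> 2"
  shows "\<exists>\<G> :: nat graph set. infinite \<G> \<and>
    (\<forall>G\<in>\<G>. \<forall>H\<in>\<G>. G \<noteq> H \<longrightarrow> \<not> graph_iso G H) \<and>
    (\<forall>G\<in>\<G>. connected_graph G \<and> in_Gclass 1 s G \<and> card (verts G) \<noteq> k \<and>
       real (tau k G) = (real (card (verts G)) - real k) / real (s * k - k + 1))"
proof -
  define F where "F n = constr.GG k s (Suc n)" for n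
  define X where "X = (s - 1) * k + 1"
  have X: "s * k - k + 1 = X" unfolding X_def by (simp add: diff_mult_distrib)
  have Xpos: "X > 0" unfolding X_def by simp
  have C: "constr k s (Suc n)" for n using assms constr_inst by simp
  have cardF: "card (verts (F n)) = k + Suc n * X" for n
    unfolding F_def X_def using constr.verts_GG[OF C] constr.card_VV[OF C] by simp
  have mono: "strict_mono (\<lambda>n. card (verts (F n)))"
    unfolding cardF using Xpos by (intro strict_monoI) simp
  have inj: "inj F"
  proof (rule injI)
    fix a b assume "F a = F b"
    then have "card (verts (F a)) = card (verts (F b))" by simp
    then show "a = b" using strict_mono_eq[OF mono, of a b] by simp
  qed
  show ?thesis
  proof (rule exI[of _ "range F"], intro conjI ballI impI)
    show "infinite (range F)"
    proof
      assume "finite (range F)"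
      then have "finite (UNIV :: nat set)" using finite_imageD inj by blast
      then show False by simp
    qed
  next
    fix G H assume "G \<in> range F" "H \<in> range F" "G \<noteq> H"
    then obtain n n' where nn: "G = F n" "H = F n'" "n \<noteq> n'" by auto
    have ne: "card (verts G) \<noteq> card (verts H)" using strict_mono_eq[OF mono, of n n'] nn by simp
    show "\<not> graph_iso G H"
    proof
      assume "graph_iso G H"
      then obtain f where "bij_betw f (verts G) (verts H)" unfolding graph_iso_def by blast
      then have "card (verts G) = card (verts H)" by (rule bij_betw_same_card)
      then show False using ne by simp
    qed
  next
    fix G assume "G \<in> range F"
    then obtain n where G: "G = F n" by auto
    show "connected_graph G" unfolding G F_def by (rule constr.conn[OF C])
    show "in_Gclass 1 s G" unfolding G F_def by (rule constr.in_class[OF C])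
    show "card (verts G) \<noteq> k" unfolding G cardF using Xpos by simp
    have t: "tau k (F n) = Suc n" unfolding F_def by (rule constr.tau_GG[OF C])
    show "real (tau k G) = (real (card (verts G)) - real k) / real (s * k - k + 1)"
    proof -
      have e1: "real (k + Suc n * X) - real k = real (Suc n) * real X" by (simp add: algebra_simps)
      have "real X \<noteq> 0" using Xpos by simp
      then have "real (Suc n) * real X / real X = real (Suc n)" by simp
      then show ?thesis unfolding G t X cardF e1 by simp
    qed
  qed
qed

end
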